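(* Any algorithm that returns islands compatible with those returned by overlap-greedy has approximation ratio $\Omega(\max\{\mathrm{Opt}_{\mathrm{P}},\sqrt{n}\})$. That is, there exist a constant $c>0$ and inputs $S$ with arbitrarily large $n$ and arbitrarily large $\mathrm{Opt}_{\mathrm{P}}(S)$ such that, if $I_1,\dots,I_m$ are the islands returned by overlap-greedy on $S$, every set of islands compatible with $I_1,\dots,I_m$ has cardinality at least $c\cdot\max\{\mathrm{Opt}_{\mathrm{P}}(S),\sqrt{n}\}\cdot \mathrm{Opt}_{\mathrm{P}}(S)$.
   Context: The input is a set $S$ of $n$ points in the plane, each having one of $k\ge 2$ colors. A set of points is monochromatic if all its points have the same color. An island is a subset $I\subseteq S$ with $\mathrm{CH}(I)\cap S=I$, where $\mathrm{CH}(I)$ is the convex hull of $I$. An island partition of $S$ is a partition of $S$ into monochromatic islands whose convex hulls are pairwise disjoint; $\mathrm{Opt}_{\mathrm{P}}(S)$ denotes its minimum possible cardinality. Overlap-greedy computes an island cover (islands may overlap): it repeatedly chooses a monochromatic island covering the maximum number of not-yet-covered points of $S$, breaking ties by choosing an island covering the fewest previously covered points, until all of $S$ is covered; it returns the chosen islands $I_1,\dots,I_m$ in order. Families $\mathcal{I}'_1,\dots,\mathcal{I}'_m$ of islands are compatible with islands $I_1,\dots,I_m$ if (i) $\bigcup_k\bigcup\mathcal{I}'_k=\bigcup_i I_i$, (ii) $\bigcup\mathcal{I}'_i\subseteq I_i$ for every $i$, and (iii) the islands in $\bigcup_k\mathcal{I}'_k$ are pairwise disjoint (their convex hulls are pairwise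 disjoint). Islands $I'_1,\dots,I'_{m'}$ are compatible with $I_1,\dots,I_m$ if $\{I'_1,\dots,I'_{m'}\}$ can be partitioned into families compatible with $I_1,\dots,I_m$. *)

theory Defs
  imports "HOL-Analysis.Analysis"
begin

type_synonym point = "real \<times> real"

definition island :: "point set \<Rightarrow> point set \<Rightarrow> bool" where
  "island S I \<longleftrightarrow> I \<subseteq> S \<and> convex hull I \<inter> S = I"

definition monochromatic :: "(point \<Rightarrow> nat) \<Rightarrow> point set \<Rightarrow> bool" where
  "monochromatic col I \<longleftrightarrow> (\<forall>p\<in>I. \<forall>q\<in>I. col p = col q)"

definition mono_island :: "point set \<Rightarrow> (point \<Rightarrow> nat) \<Rightarrow> point set \<Rightarrow> bool" where
  "mono_island S col I \<longleftrightarrow> island S I \<and> monochromatic col I"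

definition island_partition :: "point set \<Rightarrow> (point \<Rightarrow> nat) \<Rightarrow> point set set \<Rightarrow> bool" where
  "island_partition S col P \<longleftrightarrow>
     \<Union>P = S \<and> (\<forall>I\<in>P. I \<noteq> {} \<and> mono_island S col I) \<and>
     (\<forall>A\<in>P. \<forall>B\<in>P. A \<noteq> B \<longrightarrow> convex hull A \<inter> convex hull B = {})"

definition Opt_P :: "point set \<Rightarrow> (point \<Rightarrow> nat) \<Rightarrow> nat" where
  "Opt_P S col = Min {card P | P. island_partition S col P}"

definition overlap_greedy :: "point set \<Rightarrow> (point \<Rightarrow> nat) \<Rightarrow> point set list \<Rightarrow> bool" where
  "overlap_greedy S col Is \<longleftrightarrow>
     \<Union>(set Is) = S \<and>
     (\<forall>i<length Is.
        let C = \<Union>(set (take i Is)); I = Is ! i in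
          C \<noteq> S \<and> mono_island S col I \<and>
          (\<forall>I'. mono_island S col I' \<longrightarrow> card (I' - C) \<le> card (I - C)) \<and>
          (\<forall>I'. mono_island S col I' \<and> card (I' - C) = card (I - C)
                \<longrightarrow> card (I \<inter> C) \<le> card (I' \<inter> C)))"

definition compatible :: "point set \<Rightarrow> point set list \<Rightarrow> point set set \<Rightarrow> bool" where
  "compatible S Is J \<longleftrightarrow>
     (\<forall>I\<in>J. island S I) \<and>
     (\<exists>F :: nat \<Rightarrow> point set set.
        J = (\<Union>i<length Is. F i) \<and>
        (\<forall>i<length Is. \<forall>j<length Is. i \<noteq> j \<longrightarrow> F i \<inter> F j = {}) \<and>
        (\<Union>i<length Is. \<Union>(F i)) = \<Union>(set Is) \<and>
        (\<forall>i<length Is. \<Union>(F i) \<subseteq> Is ! i) \<and>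
        (\<forall>A\<in>J. \<forall>B\<in>J. A \<noteq> B \<longrightarrow> convex hull A \<inter> convex hull B = {}))"

end

theory Submission
  imports Defs
begin


definition Dz :: "int\<times>int \<Rightarrow> int\<times>int \<Rightarrow> int\<times>int \<Rightarrow> int" where
  "Dz P Q R = (fst Q - fst P)*(snd R - snd P) - (snd Q - snd P)*(fst R - fst P)"

lemma descent_aux:
  assumes cl: "\<And>P Q. P\<in>T \<Longrightarrow> Q\<in>T \<Longrightarrow> odd ((fst P + fst Q + snd P + snd Q) div 2) \<Longrightarrow>
     ((fst P + fst Q) div 2, (snd P + snd Q) div 2) \<in> T"
  and par: "\<And>P Q. P\<in>T \<Longrightarrow> Q\<in>T \<Longrightarrow> even (fst P - fst Q) \<and> even (snd P - snd Q)"
  and odds: "\<And>P. P\<in>T \<Longrightarrow> odd (fst P + snd P)"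
  shows "\<forall>P Q R. P\<in>T \<longrightarrow> Q\<in>T \<longrightarrow> R\<in>T \<longrightarrow> nat \<bar>Dz P Q R\<bar> = n \<longrightarrow> Dz P Q R = 0"
proof (induction n rule: less_induct)
  case (less n)
  show ?case
  proof (intro allI impI)
    fix P Q R assume PT: "P\<in>T" and QT: "Q\<in>T" and RT: "R\<in>T" and nD: "nat \<bar>Dz P Q R\<bar> = n"
    show "Dz P Q R = 0"
    proof (rule ccontr)
      assume nz: "Dz P Q R \<noteq> 0"
      obtain p1 p2 where P: "P = (p1,p2)" by force
      obtain q1 q2 where Q: "Q = (q1,q2)" by force
      obtain r1 r2 where R: "R = (r1,r2)" by force
      have e1: "even (p1-q1)" "even (p2-q2)" using par[OF PT QT] P Q by auto
      have e2: "even (p1-r1)" "even (p2-r2)" using par[OF PT RT] P R by auto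
      have o: "odd (p1+p2)" "odd (q1+q2)" "odd (r1+r2)" using odds PT QT RT P Q R by auto
      have small: "\<And>X Y Z. X\<in>T \<Longrightarrow> Y\<in>T \<Longrightarrow> Z\<in>T \<Longrightarrow> 2 * Dz X Y Z = Dz P Q R \<Longrightarrow> False"
      proof -
        fix X Y Z assume "X\<in>T" "Y\<in>T" "Z\<in>T" and h: "2 * Dz X Y Z = Dz P Q R"
        have "nat \<bar>Dz X Y Z\<bar> < n" using h nz nD by linarith
        then have "Dz X Y Z = 0" using less \<open>X\<in>T\<close> \<open>Y\<in>T\<close> \<open>Z\<in>T\<close> by blast
        then show False using h nz by simp
      qed
      have "odd ((p1+q1+p2+q2) div 2) \<or> odd ((p1+r1+p2+r2) div 2) \<or> odd ((q1+r1+q2+r2) div 2)"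
        using e1 e2 o by presburger
      then show False
      proof (elim disjE)
        assume h: "odd ((p1+q1+p2+q2) div 2)"
        define m1 where "m1 = (p1+q1) div 2"
        define m2 where "m2 = (p2+q2) div 2"
        have M: "(m1,m2) \<in> T" using cl[OF PT QT] h P Q m1_def m2_def by (simp add: add.commute add.left_commute)
        have a: "q1 = 2*m1 - p1" "q2 = 2*m2 - p2" using e1 unfolding m1_def m2_def by presburger+
        have "2 * Dz P (m1,m2) R = Dz P Q R" unfolding Dz_def P Q R a by (simp add: algebra_simps)
        then show False using small[OF PT M RT] by blast
      next
        assume h: "odd ((p1+r1+p2+r2) div 2)"
        define m1 where "m1 = (p1+r1) div 2"
        define m2 where "m2 = (p2+r2) div 2"
        have M: "(m1,m2) \<in> T" using cl[OF PT RT] h P R m1_def m2_def by (simp add: add.commute add.left_commute)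
        have a: "r1 = 2*m1 - p1" "r2 = 2*m2 - p2" using e2 unfolding m1_def m2_def by presburger+
        have "2 * Dz P Q (m1,m2) = Dz P Q R" unfolding Dz_def P Q R a by (simp add: algebra_simps)
        then show False using small[OF PT QT M] by blast
      next
        assume h: "odd ((q1+r1+q2+r2) div 2)"
        define m1 where "m1 = (q1+r1) div 2"
        define m2 where "m2 = (q2+r2) div 2"
        have M: "(m1,m2) \<in> T" using cl[OF QT RT] h Q R m1_def m2_def by (simp add: add.commute add.left_commute)
        have a: "r1 = 2*m1 - q1" "r2 = 2*m2 - q2" using e1 e2 unfolding m1_def m2_def by presburger+
        have "2 * Dz P Q (m1,m2) = Dz P Q R" unfolding Dz_def P Q R a by (simp add: algebra_simps)
        then show False using small[OF PT QT M] by blast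
      qed
    qed
  qed
qed



definition emb :: "int\<times>int \<Rightarrow> point" where "emb P = (real_of_int (fst P), real_of_int (snd P))"
definition Zk :: "nat \<Rightarrow> (int\<times>int) set" where
  "Zk k = {P. 1 \<le> fst P \<and> fst P \<le> 2*int k+1 \<and> 1 \<le> snd P \<and> snd P \<le> 2*int k+1 \<and> odd (fst P + snd P)}"
definition Sk :: "nat \<Rightarrow> point set" where "Sk k = emb ` Zk k"
definition colk :: "point \<Rightarrow> nat" where "colk p = (if odd \<lfloor>fst p\<rfloor> then 0 else 1)"
definition Dr :: "point \<Rightarrow> point \<Rightarrow> point \<Rightarrow> real" where
  "Dr p q r = (fst q - fst p)*(snd r - snd p) - (snd q - snd p)*(fst r - fst p)"

lemma emb_inj: "emb P = emb Q \<longleftrightarrow> P = Q"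
  by (cases P; cases Q) (auto simp: emb_def)

lemma colk_emb: "colk (emb P) = (if odd (fst P) then 0 else 1)"
  by (simp add: colk_def emb_def)

lemma Dr_emb: "Dr (emb P) (emb Q) (emb R) = real_of_int (Dz P Q R)"
  by (simp add: Dr_def Dz_def emb_def)

lemma finite_Zk: "finite (Zk k)"
proof -
  have "Zk k \<subseteq> {1..2*int k+1} \<times> {1..2*int k+1}" by (auto simp: Zk_def)
  then show ?thesis by (rule finite_subset) auto
qed

lemma finite_Sk: "finite (Sk k)" by (simp add: Sk_def finite_Zk)

lemma mid_in_hull:
  assumes "emb P \<in> I" "emb Q \<in> I" "2 * fst M = fst P + fst Q" "2 * snd M = snd P + snd Q"
  shows "emb M \<in> convex hull I"
proof -
  have a: "real_of_int (fst M) = (real_of_int (fst P) + real_of_int (fst Q))/2"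
  proof -
    have "real_of_int (2 * fst M) = real_of_int (fst P + fst Q)" using assms(3) by metis
    then show ?thesis by (simp only: of_int_mult of_int_add of_int_numeral) (simp add: field_simps)
  qed
  have b: "real_of_int (snd M) = (real_of_int (snd P) + real_of_int (snd Q))/2"
  proof -
    have "real_of_int (2 * snd M) = real_of_int (snd P + snd Q)" using assms(4) by metis
    then show ?thesis by (simp only: of_int_mult of_int_add of_int_numeral) (simp add: field_simps)
  qed
  have "emb M = midpoint (emb P) (emb Q)"
    unfolding emb_def midpoint_def using a b by (simp add: algebra_simps)
  moreover have "closed_segment (emb P) (emb Q) \<subseteq> convex hull I"
    by (intro closed_segment_subset_convex_hull hull_inc assms(1,2))
  ultimately show ?thesis using midpoint_in_closed_segment[of "emb P" "emb Q"] by (metis subsetD)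
qed

lemma island_Dr:
  assumes mi: "mono_island (Sk k) colk I" and p: "p\<in>I" and q: "q\<in>I" and r: "r\<in>I"
  shows "Dr p q r = 0"
proof -
  define T where "T = {P\<in>Zk k. emb P \<in> I}"
  have isl: "I \<subseteq> Sk k" "convex hull I \<inter> Sk k = I"
    using mi unfolding mono_island_def island_def by blast+
  have mono: "\<forall>p\<in>I. \<forall>q\<in>I. colk p = colk q"
    using mi unfolding mono_island_def monochromatic_def by blast
  have IT: "I = emb ` T" using isl(1) by (auto simp: T_def Sk_def)
  have cl: "((fst P + fst Q) div 2, (snd P + snd Q) div 2) \<in> T"
    if PT: "P\<in>T" and QT: "Q\<in>T" and h: "odd ((fst P + fst Q + snd P + snd Q) div 2)" for P Q
  proof -
    have c: "colk (emb P) = colk (emb Q)" using mono PT QT by (auto simp: T_def)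
    have PZ: "P \<in> Zk k" "Q \<in> Zk k" using PT QT by (auto simp: T_def)
    have oo: "odd (fst P) = odd (fst Q)" using c by (simp add: colk_emb split: if_splits)
    have o2: "odd (fst P + snd P)" "odd (fst Q + snd Q)" using PZ by (auto simp: Zk_def)
    have ev: "even (fst P + fst Q)" "even (snd P + snd Q)"
      using oo o2 by presburger+
    define M where "M = ((fst P + fst Q) div 2, (snd P + snd Q) div 2)"
    have m: "2 * fst M = fst P + fst Q" "2 * snd M = snd P + snd Q" using ev by (auto simp: M_def)
    have sm: "fst P + fst Q + snd P + snd Q = 2*(fst M + snd M)" using m by (simp add: algebra_simps)
    have "odd (fst M + snd M)" using h unfolding sm by simp
    moreover have "1 \<le> fst M \<and> fst M \<le> 2*int k+1 \<and> 1 \<le> snd M \<and> snd M \<le> 2*int k+1"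
      using PZ m unfolding Zk_def by auto
    ultimately have MZ: "M \<in> Zk k" unfolding Zk_def by auto
    have "emb M \<in> convex hull I" using mid_in_hull[OF _ _ m] PT QT by (auto simp: T_def)
    then have "emb M \<in> I" using isl(2) MZ by (auto simp: Sk_def)
    then show ?thesis using MZ by (simp add: T_def M_def)
  qed
  have par: "even (fst P - fst Q) \<and> even (snd P - snd Q)" if "P\<in>T" "Q\<in>T" for P Q
  proof -
    have c: "colk (emb P) = colk (emb Q)" using mono that by (auto simp: T_def)
    have PZ: "P \<in> Zk k" "Q \<in> Zk k" using that by (auto simp: T_def)
    have oo: "odd (fst P) = odd (fst Q)" using c by (simp add: colk_emb split: if_splits)
    have o2: "odd (fst P + snd P)" "odd (fst Q + snd Q)" using PZ by (auto simp: Zk_def)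
    show ?thesis using oo o2 by presburger
  qed
  have odds: "odd (fst P + snd P)" if "P\<in>T" for P using that by (auto simp: T_def Zk_def)
  obtain P Q R where "P\<in>T" "Q\<in>T" "R\<in>T" "p = emb P" "q = emb Q" "r = emb R"
    using p q r IT by blast
  moreover have "Dz P Q R = 0" using descent_aux[of T, OF cl par odds] \<open>P\<in>T\<close> \<open>Q\<in>T\<close> \<open>R\<in>T\<close> by blast
  ultimately show ?thesis by (simp add: Dr_emb)
qed



definition rowset :: "nat \<Rightarrow> int \<Rightarrow> point set" where
  "rowset k b = {p\<in>Sk k. snd p = real_of_int b}"
definition colset :: "nat \<Rightarrow> int \<Rightarrow> point set" where
  "colset k a = {p\<in>Sk k. fst p = real_of_int a}"
definition good :: "nat \<Rightarrow> point set \<Rightarrow> bool" where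
  "good k G \<longleftrightarrow> (\<exists>j. 1 \<le> j \<and> j \<le> int k \<and> G = rowset k (2*j)) \<or> (\<exists>i. 1 \<le> i \<and> i \<le> int k \<and> G = colset k (2*i))"

lemma mem_Sk: "p \<in> Sk k \<longleftrightarrow> (\<exists>a b. p = emb (a,b) \<and> 1 \<le> a \<and> a \<le> 2*int k+1 \<and> 1 \<le> b \<and> b \<le> 2*int k+1 \<and> odd (a+b))"
  unfolding Sk_def Zk_def by force

lemma mem_Sk': "p \<in> Sk k \<longleftrightarrow> (\<exists>a b. p = (real_of_int a, real_of_int b) \<and> 1 \<le> a \<and> a \<le> 2*int k+1 \<and> 1 \<le> b \<and> b \<le> 2*int k+1 \<and> odd (a+b))"
  unfolding mem_Sk emb_def by simp

lemma emb_simps [simp]: "fst (emb P) = real_of_int (fst P)" "snd (emb P) = real_of_int (snd P)"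
  by (simp_all add: emb_def)

lemma rowset_eq:
  assumes "1 \<le> j" "j \<le> int k"
  shows "rowset k (2*j) = (\<lambda>i. emb (2*i+1, 2*j)) ` {0..int k}"
proof
  show "rowset k (2*j) \<subseteq> (\<lambda>i. emb (2*i+1, 2*j)) ` {0..int k}"
  proof
    fix p assume "p \<in> rowset k (2*j)"
    then have "p \<in> Sk k" "snd p = real_of_int (2*j)" unfolding rowset_def by auto
    then obtain a b where p: "p = emb (a,b)" "1 \<le> a" "a \<le> 2*int k+1" "odd (a+b)"
      unfolding mem_Sk by blast
    have b: "b = 2*j" using p(1) \<open>snd p = real_of_int (2*j)\<close> by simp
    have "odd a" using p(4) b by presburger
    then obtain i where ai: "a = 2*i+1" by (metis oddE)
    have "i \<in> {0..int k}" using p(2,3) ai by simp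
    moreover have "p = emb (2*i+1, 2*j)" using p(1) ai b by simp
    ultimately show "p \<in> (\<lambda>i. emb (2*i+1, 2*j)) ` {0..int k}" by (rule rev_image_eqI)
  qed
next
  show "(\<lambda>i. emb (2*i+1, 2*j)) ` {0..int k} \<subseteq> rowset k (2*j)"
  proof
    fix p assume "p \<in> (\<lambda>i. emb (2*i+1, 2*j)) ` {0..int k}"
    then obtain i where i: "i \<in> {0..int k}" "p = emb (2*i+1, 2*j)" by blast
    have "odd (2*i+1+2*j)" by presburger
    then have "p = emb (2*i+1, 2*j) \<and> 1 \<le> 2*i+1 \<and> 2*i+1 \<le> 2*int k+1 \<and> 1 \<le> 2*j \<and> 2*j \<le> 2*int k+1 \<and> odd (2*i+1+2*j)"
      using i assms by auto
    then have "p \<in> Sk k" unfolding mem_Sk by blast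
    then show "p \<in> rowset k (2*j)" using i unfolding rowset_def by simp
  qed
qed

lemma colset_eq:
  assumes "1 \<le> i" "i \<le> int k"
  shows "colset k (2*i) = (\<lambda>j. emb (2*i, 2*j+1)) ` {0..int k}"
proof
  show "colset k (2*i) \<subseteq> (\<lambda>j. emb (2*i, 2*j+1)) ` {0..int k}"
  proof
    fix p assume "p \<in> colset k (2*i)"
    then have "p \<in> Sk k" "fst p = real_of_int (2*i)" unfolding colset_def by auto
    then obtain a b where p: "p = emb (a,b)" "1 \<le> b" "b \<le> 2*int k+1" "odd (a+b)"
      unfolding mem_Sk by blast
    have a: "a = 2*i" using p(1) \<open>fst p = real_of_int (2*i)\<close> by simp
    have "odd b" using p(4) a by presburger
    then obtain j where bj: "b = 2*j+1" by (metis oddE)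
    have "j \<in> {0..int k}" using p(2,3) bj by simp
    moreover have "p = emb (2*i, 2*j+1)" using p(1) bj a by simp
    ultimately show "p \<in> (\<lambda>j. emb (2*i, 2*j+1)) ` {0..int k}" by (rule rev_image_eqI)
  qed
next
  show "(\<lambda>j. emb (2*i, 2*j+1)) ` {0..int k} \<subseteq> colset k (2*i)"
  proof
    fix p assume "p \<in> (\<lambda>j. emb (2*i, 2*j+1)) ` {0..int k}"
    then obtain j where j: "j \<in> {0..int k}" "p = emb (2*i, 2*j+1)" by blast
    have "odd (2*i+(2*j+1))" by presburger
    then have "p = emb (2*i, 2*j+1) \<and> 1 \<le> 2*i \<and> 2*i \<le> 2*int k+1 \<and> 1 \<le> 2*j+1 \<and> 2*j+1 \<le> 2*int k+1 \<and> odd (2*i+(2*j+1))"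
      using j assms by auto
    then have "p \<in> Sk k" unfolding mem_Sk by blast
    then show "p \<in> colset k (2*i)" using j unfolding colset_def by simp
  qed
qed

lemma card_rowset: "1 \<le> j \<Longrightarrow> j \<le> int k \<Longrightarrow> card (rowset k (2*j)) = k+1"
proof -
  assume a: "1 \<le> j" "j \<le> int k"
  have "inj_on (\<lambda>i. emb (2*i+1, 2*j)) {0..int k}" by (auto simp: inj_on_def emb_inj)
  then show ?thesis unfolding rowset_eq[OF a] by (simp add: card_image)
qed

lemma card_colset: "1 \<le> i \<Longrightarrow> i \<le> int k \<Longrightarrow> card (colset k (2*i)) = k+1"
proof -
  assume a: "1 \<le> i" "i \<le> int k"
  have "inj_on (\<lambda>j. emb (2*i, 2*j+1)) {0..int k}" by (auto simp: inj_on_def emb_inj)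
  then show ?thesis unfolding colset_eq[OF a] by (simp add: card_image)
qed

lemma line_island:
  assumes "convex L"
  shows "island (Sk k) (Sk k \<inter> L)"
proof -
  have "convex hull (Sk k \<inter> L) \<subseteq> L" by (rule hull_minimal) (use assms in auto)
  moreover have "Sk k \<inter> L \<subseteq> convex hull (Sk k \<inter> L)" by (rule hull_subset)
  ultimately show ?thesis unfolding island_def by blast
qed

lemma convex_hline: "convex {p::point. snd p = c}"
  unfolding convex_def by (auto simp: algebra_simps simp flip: distrib_right)

lemma convex_vline: "convex {p::point. fst p = c}"
  unfolding convex_def by (auto simp: algebra_simps simp flip: distrib_right)

lemma rowset_island: "mono_island (Sk k) colk (rowset k b)"
proof -
  have "rowset k b = Sk k \<inter> {p. snd p = real_of_int b}" by (auto simp: rowset_def)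
  then have "island (Sk k) (rowset k b)" using line_island[OF convex_hline] by metis
  moreover have "monochromatic colk (rowset k b)"
    unfolding monochromatic_def rowset_def mem_Sk'
    by (auto simp: colk_def; presburger)
  ultimately show ?thesis by (simp add: mono_island_def)
qed

lemma colset_island: "mono_island (Sk k) colk (colset k a)"
proof -
  have "colset k a = Sk k \<inter> {p. fst p = real_of_int a}" by (auto simp: colset_def)
  then have "island (Sk k) (colset k a)" using line_island[OF convex_vline] by metis
  moreover have "monochromatic colk (colset k a)"
    unfolding monochromatic_def colset_def mem_Sk'
    by (auto simp: colk_def)
  ultimately show ?thesis by (simp add: mono_island_def)
qed



lemma red_snd:
  assumes "p \<in> Sk k" "colk p = 0"
  shows "\<exists>j. 1 \<le> j \<and> j \<le> int k \<and> snd p = real_of_int (2*j)"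
proof -
  obtain a b where p: "p = emb (a,b)" "1 \<le> a" "a \<le> 2*int k+1" "1 \<le> b" "b \<le> 2*int k+1" "odd (a+b)"
    using assms(1) unfolding mem_Sk by blast
  have "odd a" using assms(2) p(1) by (simp add: colk_emb split: if_splits)
  then have "even b" using p(6) by presburger
  then obtain j where bj: "b = 2*j" by (metis evenE)
  have "1 \<le> j" "j \<le> int k" using p(4,5) bj by auto
  then show ?thesis using p(1) bj by auto
qed

lemma blue_fst:
  assumes "p \<in> Sk k" "colk p \<noteq> 0"
  shows "\<exists>i. 1 \<le> i \<and> i \<le> int k \<and> fst p = real_of_int (2*i)"
proof -
  obtain a b where p: "p = emb (a,b)" "1 \<le> a" "a \<le> 2*int k+1" "1 \<le> b" "b \<le> 2*int k+1" "odd (a+b)"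
    using assms(1) unfolding mem_Sk by blast
  have "even a" using assms(2) p(1) by (simp add: colk_emb split: if_splits)
  then obtain i where ai: "a = 2*i" by (metis evenE)
  have "odd b" using p(6) ai by presburger
  then have "1 \<le> i" "i \<le> int k" using p(2,3) ai by auto
  then show ?thesis using p(1) ai by auto
qed

lemma same_or_inj_snd:
  assumes mi: "mono_island (Sk k) colk I"
  shows "(\<forall>p\<in>I. \<forall>q\<in>I. snd p = snd q) \<or> inj_on snd I"
proof (cases "\<forall>p\<in>I. \<forall>q\<in>I. snd p = snd q")
  case True then show ?thesis by blast
next
  case False
  then obtain p0 q0 where pq: "p0\<in>I" "q0\<in>I" "snd p0 \<noteq> snd q0" by blast
  show ?thesis
  proof (intro disjI2 inj_onI)
    fix r s assume r: "r\<in>I" and s: "s\<in>I" and e: "snd r = snd s"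
    show "r = s"
    proof (rule ccontr)
      assume "r \<noteq> s"
      then have f: "fst s - fst r \<noteq> 0" using e by (simp add: prod_eq_iff)
      obtain t where t: "t \<in> I" "snd t \<noteq> snd r" using pq by metis
      have "Dr r s t = (fst s - fst r)*(snd t - snd r)" unfolding Dr_def using e by simp
      moreover have "(fst s - fst r)*(snd t - snd r) \<noteq> 0" using f t(2) by simp
      ultimately show False using island_Dr[OF mi r s t(1)] by simp
    qed
  qed
qed

lemma same_or_inj_fst:
  assumes mi: "mono_island (Sk k) colk I"
  shows "(\<forall>p\<in>I. \<forall>q\<in>I. fst p = fst q) \<or> inj_on fst I"
proof (cases "\<forall>p\<in>I. \<forall>q\<in>I. fst p = fst q")
  case True then show ?thesis by blast
next
  case False
  then obtain p0 q0 where pq: "p0\<in>I" "q0\<in>I" "fst p0 \<noteq> fst q0" by blast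
  show ?thesis
  proof (intro disjI2 inj_onI)
    fix r s assume r: "r\<in>I" and s: "s\<in>I" and e: "fst r = fst s"
    show "r = s"
    proof (rule ccontr)
      assume "r \<noteq> s"
      then have f: "snd s - snd r \<noteq> 0" using e by (simp add: prod_eq_iff)
      obtain t where t: "t \<in> I" "fst t \<noteq> fst r" using pq by metis
      have "Dr r s t = - ((snd s - snd r)*(fst t - fst r))" unfolding Dr_def using e by simp
      moreover have "(snd s - snd r)*(fst t - fst r) \<noteq> 0" using f t(2) by simp
      ultimately show False using island_Dr[OF mi r s t(1)] by simp
    qed
  qed
qed

lemma card_evens: "card ((\<lambda>j. real_of_int (2*j)) ` {1..int k}) \<le> k"
proof -
  have "card ((\<lambda>j. real_of_int (2*j)) ` {1..int k}) \<le> card {1..int k}" by (rule card_image_le) simp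
  then show ?thesis by simp
qed

lemma island_bound:
  assumes mi: "mono_island (Sk k) colk I"
  shows "card I \<le> k+1 \<and> (k+1 \<le> card I \<longrightarrow> good k I)"
proof (cases "I = {}")
  case True then show ?thesis by simp
next
  case False
  then obtain p0 where p0: "p0 \<in> I" by blast
  have IS: "I \<subseteq> Sk k" and mono: "\<forall>p\<in>I. \<forall>q\<in>I. colk p = colk q"
    using mi unfolding mono_island_def island_def monochromatic_def by blast+
  have finI: "finite I" using IS finite_Sk finite_subset by blast
  show ?thesis
  proof (cases "colk p0 = 0")
    case True
    have red: "colk p = 0" if "p\<in>I" for p using mono that p0 True by metis
    obtain j where j: "1 \<le> j" "j \<le> int k" "snd p0 = real_of_int (2*j)"
      using red_snd[of p0 k] IS p0 True by blast
    from same_or_inj_snd[OF mi] show ?thesis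
    proof
      assume same: "\<forall>p\<in>I. \<forall>q\<in>I. snd p = snd q"
      have sub: "I \<subseteq> rowset k (2*j)"
      proof
        fix p assume pI: "p \<in> I"
        then have "snd p = snd p0" using same p0 by blast
        then show "p \<in> rowset k (2*j)" using pI IS j(3) unfolding rowset_def by auto
      qed
      have fr: "finite (rowset k (2*j))" using finite_Sk by (simp add: rowset_def)
      have le: "card I \<le> k+1" using card_mono[OF fr sub] card_rowset[OF j(1,2)] by simp
      moreover have "k+1 \<le> card I \<longrightarrow> good k I"
      proof
        assume "k+1 \<le> card I"
        then have "I = rowset k (2*j)" using card_subset_eq[OF fr sub] card_rowset[OF j(1,2)] le by simp
        then have g: "1 \<le> j \<and> j \<le> int k \<and> I = rowset k (2*j)" using j by simp
        show "good k I" unfolding good_def by (rule disjI1, rule exI, rule g)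
      qed
      ultimately show ?thesis by blast
    next
      assume inj: "inj_on snd I"
      have "snd ` I \<subseteq> (\<lambda>j. real_of_int (2*j)) ` {1..int k}"
      proof
        fix y assume "y \<in> snd ` I"
        then obtain p where p: "p\<in>I" and yp: "y = snd p" by blast
        have pS: "p \<in> Sk k" using IS p by blast
        have cp: "colk p = 0" using red[OF p] .
        from red_snd[OF pS cp] obtain j where jj: "1 \<le> j" "j \<le> int k" "snd p = real_of_int (2*j)"
          by blast
        have "j \<in> {1..int k}" using jj by simp
        moreover have "y = real_of_int (2*j)" using jj(3) yp by simp
        ultimately show "y \<in> (\<lambda>j. real_of_int (2*j)) ` {1..int k}" by (rule rev_image_eqI)
      qed
      then have "card (snd ` I) \<le> card ((\<lambda>j. real_of_int (2*j)) ` {1..int k})"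
        by (intro card_mono) simp_all
      then have "card (snd ` I) \<le> k" using card_evens[of k] by linarith
      moreover have "card (snd ` I) = card I" by (rule card_image[OF inj])
      ultimately show ?thesis by simp
    qed
  next
    case False
    have blue: "colk p \<noteq> 0" if "p\<in>I" for p using mono that p0 False by metis
    obtain i where i: "1 \<le> i" "i \<le> int k" "fst p0 = real_of_int (2*i)"
      using blue_fst[of p0 k] IS p0 False by blast
    from same_or_inj_fst[OF mi] show ?thesis
    proof
      assume same: "\<forall>p\<in>I. \<forall>q\<in>I. fst p = fst q"
      have sub: "I \<subseteq> colset k (2*i)"
      proof
        fix p assume pI: "p \<in> I"
        then have "fst p = fst p0" using same p0 by blast
        then show "p \<in> colset k (2*i)" using pI IS i(3) unfolding colset_def by auto
      qed
      have fr: "finite (colset k (2*i))" using finite_Sk by (simp add: colset_def)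
      have le: "card I \<le> k+1" using card_mono[OF fr sub] card_colset[OF i(1,2)] by simp
      moreover have "k+1 \<le> card I \<longrightarrow> good k I"
      proof
        assume "k+1 \<le> card I"
        then have "I = colset k (2*i)" using card_subset_eq[OF fr sub] card_colset[OF i(1,2)] le by simp
        then have g: "1 \<le> i \<and> i \<le> int k \<and> I = colset k (2*i)" using i by simp
        show "good k I" unfolding good_def by (rule disjI2, rule exI, rule g)
      qed
      ultimately show ?thesis by blast
    next
      assume inj: "inj_on fst I"
      have "fst ` I \<subseteq> (\<lambda>j. real_of_int (2*j)) ` {1..int k}"
      proof
        fix y assume "y \<in> fst ` I"
        then obtain p where p: "p\<in>I" and yp: "y = fst p" by blast
        have pS: "p \<in> Sk k" using IS p by blast
        have cp: "colk p \<noteq> 0" using blue[OF p] .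
        from blue_fst[OF pS cp] obtain j where jj: "1 \<le> j" "j \<le> int k" "fst p = real_of_int (2*j)"
          by blast
        have "j \<in> {1..int k}" using jj by simp
        moreover have "y = real_of_int (2*j)" using jj(3) yp by simp
        ultimately show "y \<in> (\<lambda>j. real_of_int (2*j)) ` {1..int k}" by (rule rev_image_eqI)
      qed
      then have "card (fst ` I) \<le> card ((\<lambda>j. real_of_int (2*j)) ` {1..int k})"
        by (intro card_mono) simp_all
      then have "card (fst ` I) \<le> k" using card_evens[of k] by linarith
      moreover have "card (fst ` I) = card I" by (rule card_image[OF inj])
      ultimately show ?thesis by simp
    qed
  qed
qed



lemma row_col_disj: "y \<in> rowset k (2*j) \<Longrightarrow> y \<in> colset k (2*i) \<Longrightarrow> False"
proof -
  assume r: "y \<in> rowset k (2*j)" and c: "y \<in> colset k (2*i)"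
  then have yS: "y \<in> Sk k" and s: "snd y = real_of_int (2*j)" and f: "fst y = real_of_int (2*i)"
    unfolding rowset_def colset_def by auto
  from yS obtain a b where y: "y = emb (a,b)" and o: "odd (a+b)" unfolding mem_Sk by blast
  have "b = 2*j" using s y by simp
  moreover have "a = 2*i" using f y by simp
  ultimately show False using o by presburger
qed

lemma rowset_disj: "y \<in> rowset k b \<Longrightarrow> y \<in> rowset k b' \<Longrightarrow> b = b'"
  unfolding rowset_def by auto

lemma colset_disj: "y \<in> colset k a \<Longrightarrow> y \<in> colset k a' \<Longrightarrow> a = a'"
  unfolding colset_def by auto

lemma set_take_nth: "x \<in> set (take t xs) \<Longrightarrow> \<exists>s<t. s < length xs \<and> xs ! s = x"
proof -
  assume "x \<in> set (take t xs)"
  then obtain s where s: "s < length (take t xs)" "take t xs ! s = x" by (metis in_set_conv_nth)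
  then show ?thesis by auto
qed

lemma greedy_good_step:
  assumes g: "overlap_greedy (Sk k) colk Is" and t: "t < length Is"
    and IH: "\<And>s. s < t \<Longrightarrow> good k (Is ! s)"
  shows "good k (Is ! t)"
proof -
  define C where "C = \<Union>(set (take t Is))"
  define I where "I = Is ! t"
  have cov: "\<Union>(set Is) = Sk k" using g unfolding overlap_greedy_def by blast
  note st0 = g[unfolded overlap_greedy_def, THEN conjunct2, rule_format, OF t]
  have st: "C \<noteq> Sk k \<and> mono_island (Sk k) colk I \<and>
          (\<forall>I'. mono_island (Sk k) colk I' \<longrightarrow> card (I' - C) \<le> card (I - C))"
    using st0 unfolding Let_def C_def I_def by (elim conjE) (intro conjI; assumption)
  have CneS: "C \<noteq> Sk k" using st by (rule conjunct1)
  have miI: "mono_island (Sk k) colk I" using st[THEN conjunct2, THEN conjunct1] .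
  have gmax: "mono_island (Sk k) colk I' \<Longrightarrow> card (I' - C) \<le> card (I - C)" for I'
    using st[THEN conjunct2, THEN conjunct2, rule_format] .
  have CS: "C \<subseteq> Sk k" unfolding C_def cov[symmetric] by (rule Union_mono[OF set_take_subset])
  then obtain x where xS: "x \<in> Sk k" and xC: "x \<notin> C" using CneS by blast
  have Cdesc: "\<exists>s<t. good k (Is ! s) \<and> y \<in> Is ! s" if "y \<in> C" for y
  proof -
    from that obtain X where X: "X \<in> set (take t Is)" "y \<in> X" unfolding C_def by blast
    from set_take_nth[OF X(1)] obtain s where "s < t" "Is ! s = X" by blast
    then show ?thesis using IH[OF \<open>s < t\<close>] X(2) \<open>s < t\<close> by blast
  qed
  have "I \<subseteq> Sk k" using miI unfolding mono_island_def island_def by blast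
  then have finI: "finite I" using finite_Sk by (rule finite_subset)
  obtain R where R: "mono_island (Sk k) colk R" "card R = k+1" "R \<inter> C = {}"
  proof (cases "colk x = 0")
    case True
    from red_snd[OF xS True] obtain j where j: "1 \<le> j" "j \<le> int k" "snd x = real_of_int (2*j)" by blast
    have xR: "x \<in> rowset k (2*j)" using xS j(3) unfolding rowset_def by simp
    have "rowset k (2*j) \<inter> C = {}"
    proof (rule ccontr)
      assume "rowset k (2*j) \<inter> C \<noteq> {}"
      then obtain y where y: "y \<in> rowset k (2*j)" "y \<in> C" by blast
      from Cdesc[OF y(2)] obtain s where s: "s < t" "good k (Is ! s)" "y \<in> Is ! s" by blast
      from s(2) show False unfolding good_def
      proof (elim disjE exE conjE)
        fix j' assume e: "Is ! s = rowset k (2*j')"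
        have "y \<in> rowset k (2*j')" using s(3) unfolding e .
        then have "2*j' = 2*j" by (rule rowset_disj[OF _ y(1)])
        then have "x \<in> rowset k (2*j')" using xR by (simp only:)
        then have "x \<in> Is ! s" unfolding e .
        moreover have "Is ! s \<in> set (take t Is)"
        proof -
          have "s < length (take t Is)" using s(1) t by simp
          then have "take t Is ! s \<in> set (take t Is)" by (rule nth_mem)
          then show ?thesis using s(1) by simp
        qed
        ultimately have "x \<in> C" unfolding C_def by (rule UnionI[rotated])
        then show False using xC by blast
      next
        fix i' assume e: "Is ! s = colset k (2*i')"
        have "y \<in> colset k (2*i')" using s(3) unfolding e .
        then show False by (rule row_col_disj[OF y(1)])
      qed
    qed
    then show ?thesis by (rule that[OF rowset_island card_rowset[OF j(1,2)]])
  next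
    case False
    from blue_fst[OF xS False] obtain i where i: "1 \<le> i" "i \<le> int k" "fst x = real_of_int (2*i)" by blast
    have xR: "x \<in> colset k (2*i)" using xS i(3) unfolding colset_def by simp
    have "colset k (2*i) \<inter> C = {}"
    proof (rule ccontr)
      assume "colset k (2*i) \<inter> C \<noteq> {}"
      then obtain y where y: "y \<in> colset k (2*i)" "y \<in> C" by blast
      from Cdesc[OF y(2)] obtain s where s: "s < t" "good k (Is ! s)" "y \<in> Is ! s" by blast
      from s(2) show False unfolding good_def
      proof (elim disjE exE conjE)
        fix j' assume e: "Is ! s = rowset k (2*j')"
        have "y \<in> rowset k (2*j')" using s(3) unfolding e .
        then show False by (rule row_col_disj[OF _ y(1)])
      next
        fix i' assume e: "Is ! s = colset k (2*i')"
        have "y \<in> colset k (2*i')" using s(3) unfolding e .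
        then have "2*i' = 2*i" by (rule colset_disj[OF _ y(1)])
        then have "x \<in> colset k (2*i')" using xR by (simp only:)
        then have "x \<in> Is ! s" unfolding e .
        moreover have "Is ! s \<in> set (take t Is)"
        proof -
          have "s < length (take t Is)" using s(1) t by simp
          then have "take t Is ! s \<in> set (take t Is)" by (rule nth_mem)
          then show ?thesis using s(1) by simp
        qed
        ultimately have "x \<in> C" unfolding C_def by (rule UnionI[rotated])
        then show False using xC by blast
      qed
    qed
    then show ?thesis by (rule that[OF colset_island card_colset[OF i(1,2)]])
  qed
  have "R - C = R" using R(3) by blast
  then have "card (R - C) = k+1" using R(2) by simp
  then have "k+1 \<le> card (I - C)" using gmax[OF R(1)] by simp
  also have "\<dots> \<le> card I" using finI by (intro card_mono) auto
  finally have "k+1 \<le> card I" .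
  moreover have imp: "k+1 \<le> card I \<longrightarrow> good k I" by (rule island_bound[OF miI, THEN conjunct2])
  ultimately have "good k I" by (rule mp[rotated])
  then show ?thesis unfolding I_def .
qed

lemma greedy_good:
  assumes g: "overlap_greedy (Sk k) colk Is"
  shows "t < length Is \<Longrightarrow> good k (Is ! t)"
proof (induction t rule: less_induct)
  case (less t)
  show ?case
  proof (rule greedy_good_step[OF g less.prems])
    fix s assume st: "s < t"
    have "s < length Is" using st less.prems by linarith
    then show "good k (Is ! s)" by (rule less.IH[OF st])
  qed
qed



lemma hseg:
  fixes a b x y :: real
  assumes "a \<le> x" "x \<le> b"
  shows "(x,y) \<in> closed_segment (a,y) (b,y)"
proof (cases "a = b")
  case True
  then have "x = a" using assms by linarith
  then show ?thesis by simp
next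
  case False
  then have ab: "b - a \<noteq> 0" "a < b" using assms by auto
  define u where "u = (x-a)/(b-a)"
  have u01: "0 \<le> u" "u \<le> 1" using assms ab unfolding u_def by (auto simp: field_simps)
  have ub: "u*(b-a) = x-a" unfolding u_def using ab(1) by simp
  have "(1-u)*a + u*b = a + u*(b-a)" by (simp add: algebra_simps)
  then have e1: "(1-u)*a + u*b = x" using ub by linarith
  have e2: "(1-u)*y + u*y = y" by (simp add: algebra_simps)
  have "(x,y) = (1-u) *\<^sub>R (a,y) + u *\<^sub>R (b,y)"
    unfolding scaleR_Pair add_Pair real_scaleR_def e1 e2 by (rule refl)
  then show ?thesis unfolding closed_segment_def using u01 by blast
qed

lemma vseg:
  fixes a b x y :: real
  assumes "a \<le> y" "y \<le> b"
  shows "(x,y) \<in> closed_segment (x,a) (x,b)"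
proof (cases "a = b")
  case True
  then have "y = a" using assms by linarith
  then show ?thesis by simp
next
  case False
  then have ab: "b - a \<noteq> 0" "a < b" using assms by auto
  define u where "u = (y-a)/(b-a)"
  have u01: "0 \<le> u" "u \<le> 1" using assms ab unfolding u_def by (auto simp: field_simps)
  have ub: "u*(b-a) = y-a" unfolding u_def using ab(1) by simp
  have "(1-u)*a + u*b = a + u*(b-a)" by (simp add: algebra_simps)
  then have e1: "(1-u)*a + u*b = y" using ub by linarith
  have e2: "(1-u)*x + u*x = x" by (simp add: algebra_simps)
  have "(x,y) = (1-u) *\<^sub>R (x,a) + u *\<^sub>R (x,b)"
    unfolding scaleR_Pair add_Pair real_scaleR_def e1 e2 by (rule refl)
  then show ?thesis unfolding closed_segment_def using u01 by blast
qed

lemma hseg_hull: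
  assumes "emb (a,y) \<in> A" "emb (b,y) \<in> A" "a \<le> x" "x \<le> b"
  shows "emb (x,y) \<in> convex hull A"
proof -
  have "closed_segment (emb (a,y)) (emb (b,y)) \<subseteq> convex hull A"
    by (intro closed_segment_subset_convex_hull hull_inc assms(1,2))
  moreover have "emb (x,y) \<in> closed_segment (emb (a,y)) (emb (b,y))"
    unfolding emb_def using hseg[of "real_of_int a" "real_of_int x" "real_of_int b" "real_of_int y"] assms(3,4) by simp
  ultimately show ?thesis by (rule subsetD)
qed

lemma vseg_hull:
  assumes "emb (x,a) \<in> A" "emb (x,b) \<in> A" "a \<le> y" "y \<le> b"
  shows "emb (x,y) \<in> convex hull A"
proof -
  have "closed_segment (emb (x,a)) (emb (x,b)) \<subseteq> convex hull A"
    by (intro closed_segment_subset_convex_hull hull_inc assms(1,2))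
  moreover have "emb (x,y) \<in> closed_segment (emb (x,a)) (emb (x,b))"
    unfolding emb_def using vseg[of "real_of_int a" "real_of_int y" "real_of_int b" "real_of_int x"] assms(3,4) by simp
  ultimately show ?thesis by (rule subsetD)
qed

lemma good_red:
  assumes "good k G" "x \<in> G" "colk x = 0" "y \<in> G"
  shows "snd y = snd x"
  using assms(1) unfolding good_def
proof (elim disjE exE conjE)
  fix j assume e: "G = rowset k (2*j)"
  show "snd y = snd x" using assms(2,4) unfolding e rowset_def by simp
next
  fix i assume e: "G = colset k (2*i)"
  have "x \<in> colset k (2*i)" using assms(2) unfolding e .
  then have xS: "x \<in> Sk k" and f: "fst x = real_of_int (2*i)" unfolding colset_def by auto
  from xS obtain a b where xab: "x = emb (a,b)" unfolding mem_Sk by blast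
  have "a = 2*i" using f xab by simp
  then have "colk x = 1" using xab by (simp add: colk_emb)
  then show "snd y = snd x" using assms(3) by simp
qed

lemma good_blue:
  assumes "good k G" "x \<in> G" "colk x \<noteq> 0" "y \<in> G"
  shows "fst y = fst x"
  using assms(1) unfolding good_def
proof (elim disjE exE conjE)
  fix i assume e: "G = colset k (2*i)"
  show "fst y = fst x" using assms(2,4) unfolding e colset_def by simp
next
  fix j assume e: "G = rowset k (2*j)"
  have "x \<in> rowset k (2*j)" using assms(2) unfolding e .
  then have xS: "x \<in> Sk k" and f: "snd x = real_of_int (2*j)" unfolding rowset_def by auto
  from xS obtain a b where xab: "x = emb (a,b)" and o: "odd (a+b)" unfolding mem_Sk by blast
  have "b = 2*j" using f xab by simp
  then have "odd a" using o by presburger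
  then have "colk x = 0" using xab by (simp add: colk_emb)
  then show "fst y = fst x" using assms(3) by simp
qed

lemma good_mono:
  assumes "good k G" "x \<in> G" "y \<in> G"
  shows "colk x = colk y"
  using assms(1) unfolding good_def
proof (elim disjE exE conjE)
  fix j assume e: "G = rowset k (2*j)"
  have "monochromatic colk G" using rowset_island[of k "2*j"] unfolding e mono_island_def by blast
  then show ?thesis using assms(2,3) unfolding monochromatic_def by blast
next
  fix i assume e: "G = colset k (2*i)"
  have "monochromatic colk G" using colset_island[of k "2*i"] unfolding e mono_island_def by blast
  then show ?thesis using assms(2,3) unfolding monochromatic_def by blast
qed

lemma pt_in_Sk:
  assumes "1 \<le> a" "a \<le> 2*int k+1" "1 \<le> b" "b \<le> 2*int k+1" "odd (a+b)"
  shows "emb (a,b) \<in> Sk k"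
  unfolding Sk_def Zk_def using assms by (intro imageI) simp



lemma crossing_bound:
  assumes g: "overlap_greedy (Sk k) colk Is" and c: "compatible (Sk k) Is J"
  shows "k*k \<le> card J"
proof -
  have isl: "\<forall>I\<in>J. island (Sk k) I" using c unfolding compatible_def by (rule conjunct1)
  from c[unfolded compatible_def, THEN conjunct2] obtain F where
    F: "J = (\<Union>i<length Is. F i) \<and>
        (\<forall>i<length Is. \<forall>j<length Is. i \<noteq> j \<longrightarrow> F i \<inter> F j = {}) \<and>
        (\<Union>i<length Is. \<Union>(F i)) = \<Union>(set Is) \<and>
        (\<forall>i<length Is. \<Union>(F i) \<subseteq> Is ! i) \<and>
        (\<forall>A\<in>J. \<forall>B\<in>J. A \<noteq> B \<longrightarrow> convex hull A \<inter> convex hull B = {})"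
    by (rule exE)
  have Jd: "J = (\<Union>i<length Is. F i)" using F by (rule conjunct1)
  have cov: "(\<Union>i<length Is. \<Union>(F i)) = \<Union>(set Is)" using F[THEN conjunct2, THEN conjunct2] by (rule conjunct1)
  have sub: "\<forall>i<length Is. \<Union>(F i) \<subseteq> Is ! i" using F[THEN conjunct2, THEN conjunct2, THEN conjunct2] by (rule conjunct1)
  have disj: "\<forall>A\<in>J. \<forall>B\<in>J. A \<noteq> B \<longrightarrow> convex hull A \<inter> convex hull B = {}"
    using F[THEN conjunct2, THEN conjunct2, THEN conjunct2] by (rule conjunct2)
  have cov2: "\<Union>(set Is) = Sk k" using g unfolding overlap_greedy_def by (rule conjunct1)
  have JS: "A \<subseteq> Sk k" if "A \<in> J" for A using isl that unfolding island_def by blast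
  have finJ: "finite J"
  proof (rule finite_subset)
    show "J \<subseteq> Pow (Sk k)" using JS by blast
    show "finite (Pow (Sk k))" using finite_Sk by simp
  qed
  have Jgood: "\<exists>G. good k G \<and> A \<subseteq> G" if A: "A \<in> J" for A
  proof -
    from A obtain i where i: "i < length Is" "A \<in> F i" unfolding Jd by blast
    have "A \<subseteq> \<Union>(F i)" using i(2) by blast
    also have "\<dots> \<subseteq> Is ! i" using sub i(1) by blast
    finally have "A \<subseteq> Is ! i" .
    moreover have "good k (Is ! i)" by (rule greedy_good[OF g i(1)])
    ultimately show ?thesis by blast
  qed
  have Jcov: "\<exists>A\<in>J. x \<in> A" if x: "x \<in> Sk k" for x
  proof -
    have "x \<in> (\<Union>i<length Is. \<Union>(F i))" using x unfolding cov cov2 .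
    then obtain i A where "i < length Is" "A \<in> F i" "x \<in> A" by blast
    then show ?thesis unfolding Jd by blast
  qed
  have uniq: "A = B" if "A \<in> J" "B \<in> J" "x \<in> convex hull A" "x \<in> B" for A B x
  proof (rule ccontr)
    assume ne: "A \<noteq> B"
    have "x \<in> convex hull B" using that(4) by (rule hull_inc)
    then have "x \<in> convex hull A \<inter> convex hull B" using that(3) by blast
    moreover have "convex hull A \<inter> convex hull B = {}" using disj that(1,2) ne by blast
    ultimately show False by blast
  qed
  define pc where "pc x = (SOME A. A \<in> J \<and> x \<in> A)" for x
  have pc: "pc x \<in> J \<and> x \<in> pc x" if "x \<in> Sk k" for x
  proof -
    have "\<exists>A. A \<in> J \<and> x \<in> A" using Jcov[OF that] by blast
    then show ?thesis unfolding pc_def by (rule someI_ex)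
  qed
  have pc_eq: "pc x = A" if "x \<in> Sk k" "A \<in> J" "x \<in> convex hull A" for x A
    using uniq[OF that(2) _ that(3), of "pc x"] pc[OF that(1)] by metis
  have Jmono: "colk x = colk y" if AJ: "A \<in> J" and xy: "x \<in> A" "y \<in> A" for A x y
  proof -
    obtain G where G: "good k G" "A \<subseteq> G" using Jgood[OF AJ] by blast
    show ?thesis by (rule good_mono[OF G(1)]) (use G(2) xy in blast)+
  qed
  define rl where "rl i j = emb (2*i-1, 2*j)" for i j :: int
  define rr where "rr i j = emb (2*i+1, 2*j)" for i j :: int
  define bd where "bd i j = emb (2*i, 2*j-1)" for i j :: int
  define bu where "bu i j = emb (2*i, 2*j+1)" for i j :: int
  define K where "K = {1..int k}"
  have pts: "rl i j \<in> Sk k \<and> rr i j \<in> Sk k \<and> bd i j \<in> Sk k \<and> bu i j \<in> Sk k"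
    if "i \<in> K" "j \<in> K" for i j
  proof -
    have r: "1 \<le> i" "i \<le> int k" "1 \<le> j" "j \<le> int k" using that unfolding K_def by auto
    have o1: "odd (2*i-1 + 2*j)" "odd (2*i+1+2*j)" "odd (2*i + (2*j-1))" "odd (2*i+(2*j+1))" by presburger+
    show ?thesis unfolding rl_def rr_def bd_def bu_def
      using pt_in_Sk[OF _ _ _ _ o1(1)] pt_in_Sk[OF _ _ _ _ o1(2)] pt_in_Sk[OF _ _ _ _ o1(3)] pt_in_Sk[OF _ _ _ _ o1(4)] r
      by simp
  qed
  have col_rr: "colk (rr i j) = 0" for i j unfolding rr_def colk_emb by simp
  have col_bu: "colk (bu i j) \<noteq> 0" for i j unfolding bu_def colk_emb by simp
  have key1: "pc (bd i j) \<noteq> pc (bu i j)" if "i \<in> K" "j \<in> K" "pc (rl i j) = pc (rr i j)" for i j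
  proof
    assume eq: "pc (bd i j) = pc (bu i j)"
    note P = pts[OF that(1,2)]
    define A where "A = pc (rr i j)"
    define B where "B = pc (bu i j)"
    have AJ: "A \<in> J" and rrA: "rr i j \<in> A" using pc P unfolding A_def by blast+
    have rlA: "rl i j \<in> A" using pc P that(3) unfolding A_def by metis
    have BJ: "B \<in> J" and buB: "bu i j \<in> B" using pc P unfolding B_def by blast+
    have bdB: "bd i j \<in> B" using pc P eq unfolding B_def by metis
    have c1: "emb (2*i, 2*j) \<in> convex hull A"
      by (rule hseg_hull[of "2*i-1" "2*j" A "2*i+1"]) (use rlA rrA in \<open>simp_all add: rl_def rr_def\<close>)
    have c2: "emb (2*i, 2*j) \<in> convex hull B"
      by (rule vseg_hull[of "2*i" "2*j-1" B "2*j+1"]) (use bdB buB in \<open>simp_all add: bd_def bu_def\<close>)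
    have "A \<noteq> B"
    proof
      assume "A = B"
      then have "colk (rr i j) = colk (bu i j)" using Jmono[OF AJ rrA] buB by simp
      then show False using col_rr col_bu by simp
    qed
    then have "convex hull A \<inter> convex hull B = {}" using disj AJ BJ by blast
    then show False using c1 c2 by blast
  qed
  define f where "f p = (if pc (rl (fst p) (snd p)) \<noteq> pc (rr (fst p) (snd p))
                         then pc (rr (fst p) (snd p)) else pc (bu (fst p) (snd p)))" for p
  have fJ: "f ` (K \<times> K) \<subseteq> J"
  proof
    fix A assume "A \<in> f ` (K \<times> K)"
    then obtain i j where ij: "i \<in> K" "j \<in> K" "A = f (i,j)" by blast
    note P = pts[OF ij(1,2)]
    show "A \<in> J" using ij(3) pc P unfolding f_def by auto
  qed
  have hclaim: "False" if "i \<in> K" "i' \<in> K" "j \<in> K" "i < i'" "pc (rr i j) = pc (rr i' j)"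
       "pc (rl i' j) \<noteq> pc (rr i' j)" for i i' j
  proof -
    note P = pts[OF that(1,3)] and P' = pts[OF that(2,3)]
    define A where "A = pc (rr i' j)"
    have AJ: "A \<in> J" and a1: "rr i' j \<in> A" using pc P' unfolding A_def by blast+
    have a2: "rr i j \<in> A" using pc P that(5) unfolding A_def by metis
    have "emb (2*i'-1, 2*j) \<in> convex hull A"
      by (rule hseg_hull[of "2*i+1" "2*j" A "2*i'+1"]) (use a1 a2 that(4) in \<open>simp_all add: rr_def\<close>)
    then have "pc (rl i' j) = A" using pc_eq P' AJ unfolding rl_def by blast
    then show False using that(6) unfolding A_def by simp
  qed
  have vclaim: "False" if "i \<in> K" "j \<in> K" "j' \<in> K" "j < j'" "pc (bu i j) = pc (bu i j')"
       "pc (bd i j') \<noteq> pc (bu i j')" for i j j'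
  proof -
    note P = pts[OF that(1,2)] and P' = pts[OF that(1,3)]
    define A where "A = pc (bu i j')"
    have AJ: "A \<in> J" and a1: "bu i j' \<in> A" using pc P' unfolding A_def by blast+
    have a2: "bu i j \<in> A" using pc P that(5) unfolding A_def by metis
    have "emb (2*i, 2*j'-1) \<in> convex hull A"
      by (rule vseg_hull[of "2*i" "2*j+1" A "2*j'+1"]) (use a1 a2 that(4) in \<open>simp_all add: bu_def\<close>)
    then have "pc (bd i j') = A" using pc_eq P' AJ unfolding bd_def by blast
    then show False using that(6) unfolding A_def by simp
  qed
  have inj: "inj_on f (K \<times> K)"
  proof (rule inj_onI)
    fix p q assume pK: "p \<in> K \<times> K" and qK: "q \<in> K \<times> K" and fe: "f p = f q"
    obtain i j where p: "p = (i,j)" "i \<in> K" "j \<in> K" using pK by blast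
    obtain i' j' where q: "q = (i',j')" "i' \<in> K" "j' \<in> K" using qK by blast
    note P = pts[OF p(2,3)] and Q = pts[OF q(2,3)]
    show "p = q"
    proof (cases "pc (rl i j) \<noteq> pc (rr i j)")
      case splitp: True
      then have fp: "f p = pc (rr i j)" unfolding f_def p by simp
      show ?thesis
      proof (cases "pc (rl i' j') \<noteq> pc (rr i' j')")
        case splitq: True
        then have fq: "f q = pc (rr i' j')" unfolding f_def q by simp
        define A where "A = pc (rr i j)"
        have AJ: "A \<in> J" and a1: "rr i j \<in> A" using pc P unfolding A_def by blast+
        have a2: "rr i' j' \<in> A" using pc Q fe fp fq unfolding A_def by metis
        obtain G where G: "good k G" "A \<subseteq> G" using Jgood[OF AJ] by blast
        have "snd (rr i' j') = snd (rr i j)"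
          by (rule good_red[OF G(1) _ col_rr]) (use G(2) a1 a2 in blast)+
        then have jj: "j' = j" unfolding rr_def by simp
        have "i = i'"
        proof (rule ccontr)
          assume "i \<noteq> i'"
          then have "i < i' \<or> i' < i" by linarith
          then show False
          proof
            assume "i < i'"
            then show False using hclaim[OF p(2) q(2) p(3)] fe fp fq jj splitq by simp
          next
            assume "i' < i"
            then show False using hclaim[OF q(2) p(2) p(3)] fe fp fq jj splitp by simp
          qed
        qed
        then show ?thesis using p q jj by simp
      next
        case nsq: False
        then have fq: "f q = pc (bu i' j')" unfolding f_def q by simp
        define A where "A = pc (rr i j)"
        have AJ: "A \<in> J" and a1: "rr i j \<in> A" using pc P unfolding A_def by blast+
        have a2: "bu i' j' \<in> A" using pc Q fe fp fq unfolding A_def by metis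
        have "colk (rr i j) = colk (bu i' j')" by (rule Jmono[OF AJ a1 a2])
        then show ?thesis using col_rr col_bu by simp
      qed
    next
      case nsp: False
      then have fp: "f p = pc (bu i j)" unfolding f_def p by simp
      have bsp: "pc (bd i j) \<noteq> pc (bu i j)" using key1[OF p(2,3)] nsp by blast
      show ?thesis
      proof (cases "pc (rl i' j') \<noteq> pc (rr i' j')")
        case splitq: True
        then have fq: "f q = pc (rr i' j')" unfolding f_def q by simp
        define A where "A = pc (rr i' j')"
        have AJ: "A \<in> J" and a1: "rr i' j' \<in> A" using pc Q unfolding A_def by blast+
        have a2: "bu i j \<in> A" using pc P fe fp fq unfolding A_def by metis
        have "colk (rr i' j') = colk (bu i j)" by (rule Jmono[OF AJ a1 a2])
        then show ?thesis using col_rr col_bu by simp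
      next
        case nsq: False
        then have fq: "f q = pc (bu i' j')" unfolding f_def q by simp
        have bsq: "pc (bd i' j') \<noteq> pc (bu i' j')" using key1[OF q(2,3)] nsq by blast
        define A where "A = pc (bu i j)"
        have AJ: "A \<in> J" and a1: "bu i j \<in> A" using pc P unfolding A_def by blast+
        have a2: "bu i' j' \<in> A" using pc Q fe fp fq unfolding A_def by metis
        obtain G where G: "good k G" "A \<subseteq> G" using Jgood[OF AJ] by blast
        have "fst (bu i' j') = fst (bu i j)"
          by (rule good_blue[OF G(1) _ col_bu]) (use G(2) a1 a2 in blast)+
        then have ii: "i' = i" unfolding bu_def by simp
        have "j = j'"
        proof (rule ccontr)
          assume "j \<noteq> j'"
          then have "j < j' \<or> j' < j" by linarith
          then show False
          proof
            assume "j < j'"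
            then show False using vclaim[OF p(2) p(3) q(3)] fe fp fq ii bsq by simp
          next
            assume "j' < j"
            then show False using vclaim[OF p(2) q(3) p(3)] fe fp fq ii bsp by simp
          qed
        qed
        then show ?thesis using p q ii by simp
      qed
    qed
  qed
  have "card (K \<times> K) \<le> card J" by (rule card_inj_on_le[OF inj fJ finJ])
  moreover have "card (K \<times> K) = k*k" unfolding K_def by (simp add: card_cartesian_product)
  ultimately show ?thesis by simp
qed



definition P0 :: "nat \<Rightarrow> point set set" where "P0 k = (\<lambda>b. rowset k b) ` {1..2*int k+1}"

lemma hull_rowset: "convex hull (rowset k b) \<subseteq> {p. snd p = real_of_int b}"
  by (rule hull_minimal) (auto simp: rowset_def convex_hline)

lemma P0_partition:
  assumes k: "1 \<le> k"
  shows "island_partition (Sk k) colk (P0 k)"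
  unfolding island_partition_def
proof (intro conjI)
  show "\<Union>(P0 k) = Sk k"
  proof
    show "\<Union>(P0 k) \<subseteq> Sk k" unfolding P0_def rowset_def by blast
    show "Sk k \<subseteq> \<Union>(P0 k)"
    proof
      fix p assume pS: "p \<in> Sk k"
      then obtain a b where p: "p = emb (a,b)" "1 \<le> b" "b \<le> 2*int k+1" unfolding mem_Sk by blast
      have "p \<in> rowset k b" using pS p(1) unfolding rowset_def by simp
      moreover have "rowset k b \<in> P0 k" using p(2,3) unfolding P0_def by simp
      ultimately show "p \<in> \<Union>(P0 k)" by blast
    qed
  qed
  show "\<forall>I\<in>P0 k. I \<noteq> {} \<and> mono_island (Sk k) colk I"
  proof
    fix I assume "I \<in> P0 k"
    then obtain b where b: "1 \<le> b" "b \<le> 2*int k+1" "I = rowset k b" unfolding P0_def by auto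
    define a where "a = (if even b then 1 else (2::int))"
    have o: "odd (a+b)" unfolding a_def by simp
    have "emb (a,b) \<in> Sk k" by (rule pt_in_Sk[OF _ _ b(1,2) o]) (use k in \<open>simp_all add: a_def\<close>)
    then have "emb (a,b) \<in> I" unfolding b(3) rowset_def by simp
    then show "I \<noteq> {} \<and> mono_island (Sk k) colk I" using rowset_island b(3) by blast
  qed
  show "\<forall>A\<in>P0 k. \<forall>B\<in>P0 k. A \<noteq> B \<longrightarrow> convex hull A \<inter> convex hull B = {}"
  proof (intro ballI impI)
    fix A B assume A: "A \<in> P0 k" and B: "B \<in> P0 k" and ne: "A \<noteq> B"
    obtain b where b: "A = rowset k b" using A unfolding P0_def by auto
    obtain b' where b': "B = rowset k b'" using B unfolding P0_def by auto
    have "b \<noteq> b'" using ne b b' by blast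
    then have "{p::point. snd p = real_of_int b} \<inter> {p. snd p = real_of_int b'} = {}" by auto
    then show "convex hull A \<inter> convex hull B = {}" using hull_rowset[of k b] hull_rowset[of k b'] b b' by blast
  qed
qed

lemma card_P0: "card (P0 k) \<le> 2*k+1"
proof -
  have "card (P0 k) \<le> card {1..2*int k+1}" unfolding P0_def by (rule card_image_le) simp
  then show ?thesis by simp
qed

lemma partition_card_lower:
  assumes P: "island_partition (Sk k) colk P"
  shows "card (Sk k) \<le> card P * (k+1)"
proof -
  have U: "\<Union>P = Sk k" using P unfolding island_partition_def by (rule conjunct1)
  have PI: "\<forall>I\<in>P. I \<noteq> {} \<and> mono_island (Sk k) colk I"
    using P unfolding island_partition_def by (rule conjunct2[THEN conjunct1])
  have "card (Sk k) = card (\<Union>P)" using U by simp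
  also have "\<dots> \<le> sum card P" by (rule card_Union_le_sum_card)
  also have "\<dots> \<le> card P * (k+1)"
  proof -
    have bnd: "card I \<le> k+1" if "I \<in> P" for I
    proof -
      have "mono_island (Sk k) colk I" using PI that by blast
      then show "card I \<le> k+1" by (rule island_bound[THEN conjunct1])
    qed
    have "sum card P \<le> of_nat (card P) * (k+1)" by (rule sum_bounded_above) (rule bnd)
    then show ?thesis by simp
  qed
  finally show ?thesis .
qed

lemma card_Sk_lower: "k*(k+1) \<le> card (Sk k)"
proof -
  define K where "K = {1..int k}"
  have "card (\<Union>j\<in>K. rowset k (2*j)) = (\<Sum>j\<in>K. card (rowset k (2*j)))"
  proof (rule card_UN_disjoint)
    show "finite K" unfolding K_def by simp
    show "\<forall>i\<in>K. finite (rowset k (2*i))" using finite_Sk unfolding rowset_def by simp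
    show "\<forall>i\<in>K. \<forall>j\<in>K. i \<noteq> j \<longrightarrow> rowset k (2*i) \<inter> rowset k (2*j) = {}"
      unfolding rowset_def by auto
  qed
  also have "\<dots> = (\<Sum>j\<in>K. k+1)"
    by (rule sum.cong) (auto simp: K_def card_rowset)
  also have "\<dots> = k*(k+1)" unfolding K_def by simp
  finally have e: "card (\<Union>j\<in>K. rowset k (2*j)) = k*(k+1)" .
  have "(\<Union>j\<in>K. rowset k (2*j)) \<subseteq> Sk k" unfolding rowset_def by blast
  then have "card (\<Union>j\<in>K. rowset k (2*j)) \<le> card (Sk k)" by (rule card_mono[OF finite_Sk])
  then show ?thesis using e by simp
qed

lemma card_Sk_upper: "card (Sk k) \<le> (2*k+1)^2"
proof -
  have "card (Sk k) \<le> card (Zk k)" unfolding Sk_def by (rule card_image_le[OF finite_Zk])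
  also have "\<dots> \<le> card ({1..2*int k+1} \<times> {1..2*int k+1})"
    by (rule card_mono) (auto simp: Zk_def)
  also have "\<dots> = (2*k+1)^2"
  proof -
    have e: "nat (2*int k+1) = 2*k+1" using nat_int[of "2*k+1"] by simp
    show ?thesis by (simp add: card_cartesian_product power2_eq_square e)
  qed
  finally show ?thesis .
qed

lemma Opt_bounds:
  assumes k: "1 \<le> k"
  shows "Opt_P (Sk k) colk \<le> 2*k+1" "k \<le> Opt_P (Sk k) colk"
proof -
  define Q where "Q = {card P | P. island_partition (Sk k) colk P}"
  have finQ: "finite Q"
  proof -
    have "Q \<subseteq> card ` Pow (Pow (Sk k))"
    proof
      fix x assume "x \<in> Q"
      then obtain P where P: "x = card P" "island_partition (Sk k) colk P" unfolding Q_def by blast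
      have "\<Union>P = Sk k" using P(2) unfolding island_partition_def by (rule conjunct1)
      then have "P \<subseteq> Pow (Sk k)" by blast
      then show "x \<in> card ` Pow (Pow (Sk k))" using P(1) by blast
    qed
    moreover have "finite (card ` Pow (Pow (Sk k)))" using finite_Sk by simp
    ultimately show ?thesis by (rule finite_subset)
  qed
  have inQ: "card (P0 k) \<in> Q" unfolding Q_def
    by (rule CollectI, rule exI[of _ "P0 k"], rule conjI[OF refl P0_partition[OF k]])
  have "Opt_P (Sk k) colk = Min Q" unfolding Opt_P_def Q_def ..
  moreover have "Min Q \<le> card (P0 k)" by (rule Min_le[OF finQ inQ])
  ultimately show "Opt_P (Sk k) colk \<le> 2*k+1" using card_P0[of k] by linarith
  have "Min Q \<in> Q" using finQ inQ by (intro Min_in) auto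
  then obtain P where P: "Min Q = card P" "island_partition (Sk k) colk P" unfolding Q_def by blast
  have "k*(k+1) \<le> card P * (k+1)" using card_Sk_lower[of k] partition_card_lower[OF P(2)] by linarith
  then have "k \<le> card P" by (rule mult_right_le_imp_le) simp
  then show "k \<le> Opt_P (Sk k) colk" using P(1) \<open>Opt_P (Sk k) colk = Min Q\<close> by simp
qed

theorem lemma4:
  shows "\<exists>c::real. c > 0 \<and>
    (\<forall>N::nat. \<exists>(S::point set) (col::point \<Rightarrow> nat).
        finite S \<and> card S \<ge> N \<and> Opt_P S col \<ge> N \<and>
        (\<forall>Is. overlap_greedy S col Is \<longrightarrow>
           (\<forall>J. compatible S Is J \<longrightarrow>
              real (card J) \<ge> c * max (real (Opt_P S col)) (sqrt (real (card S))) * real (Opt_P S col))))"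
proof (intro exI[of _ "1/9"] conjI allI)
  show "(0::real) < 1/9" by simp
  fix N :: nat
  define k where "k = N+1"
  have k1: "1 \<le> k" unfolding k_def by simp
  have o1: "Opt_P (Sk k) colk \<le> 2*k+1" and o2: "k \<le> Opt_P (Sk k) colk" using Opt_bounds[OF k1] by auto
  have cS: "k*(k+1) \<le> card (Sk k)" by (rule card_Sk_lower)
  have "N \<le> k*(k+1)" unfolding k_def by simp
  then have cN: "N \<le> card (Sk k)" using cS by linarith
  have oN: "N \<le> Opt_P (Sk k) colk" using o2 unfolding k_def by simp
  show "\<exists>(S::point set) (col::point \<Rightarrow> nat).
        finite S \<and> card S \<ge> N \<and> Opt_P S col \<ge> N \<and>
        (\<forall>Is. overlap_greedy S col Is \<longrightarrow>
           (\<forall>J. compatible S Is J \<longrightarrow>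
              real (card J) \<ge> 1/9 * max (real (Opt_P S col)) (sqrt (real (card S))) * real (Opt_P S col)))"
  proof (intro exI[of _ "Sk k"] exI[of _ colk] conjI allI impI)
    show "finite (Sk k)" by (rule finite_Sk)
    show "N \<le> card (Sk k)" by (rule cN)
    show "N \<le> Opt_P (Sk k) colk" by (rule oN)
    fix Is J assume g: "overlap_greedy (Sk k) colk Is" and c: "compatible (Sk k) Is J"
    have cJ: "k*k \<le> card J" by (rule crossing_bound[OF g c])
    define Ov where "Ov = real (Opt_P (Sk k) colk)"
    define n where "n = real (card (Sk k))"
    have O3: "Ov \<le> 3 * real k" "0 \<le> Ov" using o1 k1 unfolding Ov_def by linarith+
    have "real (card (Sk k)) \<le> real ((2*k+1)^2)" using card_Sk_upper[of k] by (simp only: of_nat_le_iff)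
    then have "n \<le> (2 * real k + 1)^2" unfolding n_def by (simp add: add.commute)
    then have "sqrt n \<le> sqrt ((2 * real k + 1)^2)" by (rule real_sqrt_le_mono)
    then have "sqrt n \<le> 2 * real k + 1" by simp
    then have s3: "sqrt n \<le> 3 * real k" using k1 by linarith
    have m3: "max Ov (sqrt n) \<le> 3 * real k" using O3 s3 by simp
    have "max Ov (sqrt n) * Ov \<le> (3 * real k) * (3 * real k)"
      by (rule mult_mono[OF m3 O3(1)]) (use O3 in auto)
    then have "1/9 * max Ov (sqrt n) * Ov \<le> real k * real k" by simp
    also have "\<dots> \<le> real (card J)"
    proof -
      have "real (k*k) \<le> real (card J)" using cJ by (simp only: of_nat_le_iff)
      then show ?thesis by simp
    qed
    finally show "1/9 * max (real (Opt_P (Sk k) colk)) (sqrt (real (card (Sk k)))) * real (Opt_P (Sk k) colk) \<le> real (card J)"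
      unfolding Ov_def n_def .
  qed
qed


end
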